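(* Assume $\mathrm{cov}(\mathcal{M}) > \aleph_1$. Then there is a Tychonoff space $X$ which is not productively countably tight and such that, for each $x \in X$, player I does not have a winning strategy in the game $\mathsf{G}_1(\Omega_x, \Omega_x)$.
   Context: $\mathrm{cov}(\mathcal{M})$ is the least number of meager subsets of $\mathbb{R}$ needed to cover $\mathbb{R}$. For $x \in X$, $\Omega_x$ is the collection of all sets $A \subset X$ with $x \notin A$ and $x \in \overline{A}$. The game $\mathsf{G}_1(\Omega_x,\Omega_x)$: in each inning $n \in \omega$ player I chooses $A_n \in \Omega_x$, then player II chooses $a_n \in A_n$; II wins iff $\{a_n : n \in \omega\} \in \Omega_x$. A space is countably tight if whenever $y \in \overline{A}$ there is a countable $B \subset A$ with $y \in \overline{B}$; $X$ is productively countably tight if $X \times Y$ is countably tight for every countably tight space $Y$. *)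

theory Defs
  imports "HOL-Analysis.Analysis"
begin

definition nowhere_dense_real :: "real set \<Rightarrow> bool" where
  "nowhere_dense_real S \<longleftrightarrow> interior (closure S) = {}"

definition meager_real :: "real set \<Rightarrow> bool" where
  "meager_real S \<longleftrightarrow>
     (\<exists>N :: nat \<Rightarrow> real set. (\<forall>n. nowhere_dense_real (N n)) \<and> S \<subseteq> (\<Union>n. N n))"

definition covM_gt_aleph1 :: bool where
  "covM_gt_aleph1 \<longleftrightarrow>
     (\<forall>F :: real set set. (\<forall>M\<in>F. meager_real M) \<and> \<Union>F = UNIV
        \<longrightarrow> (card_of F, cardSuc natLeq) \<notin> ordLeq)"

definition tychonoff_space :: "'a topology \<Rightarrow> bool" where
  "tychonoff_space X \<longleftrightarrow> completely_regular_space X \<and> t1_space X"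

definition countably_tight :: "'a topology \<Rightarrow> bool" where
  "countably_tight X \<longleftrightarrow>
     (\<forall>A y. A \<subseteq> topspace X \<and> y \<in> X closure_of A \<longrightarrow>
        (\<exists>B. B \<subseteq> A \<and> countable B \<and> y \<in> X closure_of B))"

text \<open>Productive countable tightness, with the test spaces Y ranging over
  topologies on the carrier type 'b.\<close>
definition productively_countably_tight_wrt :: "'b itself \<Rightarrow> 'a topology \<Rightarrow> bool" where
  "productively_countably_tight_wrt _ X \<longleftrightarrow>
     (\<forall>Y :: 'b topology. countably_tight Y \<longrightarrow> countably_tight (prod_topology X Y))"

definition Omega_at :: "'a topology \<Rightarrow> 'a \<Rightarrow> 'a set set" where
  "Omega_at X x = {A. A \<subseteq> topspace X \<and> x \<notin> A \<and> x \<in> X closure_of A}"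

text \<open>A strategy for player I assigns to every finite sequence of previous moves of
  player II a legal move in Omega_x; it is winning if every play according to it
  (II picking a_n in the n-th move of I) is lost by II.\<close>
definition playerI_wins_G1_Omega :: "'a topology \<Rightarrow> 'a \<Rightarrow> bool" where
  "playerI_wins_G1_Omega X x \<longleftrightarrow>
     (\<exists>\<sigma> :: 'a list \<Rightarrow> 'a set.
        (\<forall>s. \<sigma> s \<in> Omega_at X x) \<and>
        (\<forall>a :: nat \<Rightarrow> 'a. (\<forall>n. a n \<in> \<sigma> (map a [0..<n])) \<longrightarrow> range a \<notin> Omega_at X x))"

end

theory Submission
  imports Defs "HOL-Library.Countable_Set_Type"
begin
unbundle cardinal_syntax

abbreviation W :: "nat set rel" where "W \<equiv> cardSuc natLeq"

lemma W_card: "Card_order W" by (simp add: cardSuc_Card_order natLeq_Card_order)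
lemma W_wo: "Well_order W" using W_card card_order_on_def by blast

lemma W_underS_countable: assumes "a \<in> Field W" shows "countable (underS W a)"
proof -
  have "|underS W a| <o W" using card_of_underS[OF W_card assms] .
  hence "|underS W a| \<le>o natLeq"
    using cardSuc_ordLeq_ordLess[OF natLeq_Card_order card_of_Card_order] by blast
  thus ?thesis by (simp add: countable_card_le_natLeq)
qed

lemma W_uncountable: "\<not> countable (Field W)"
proof
  assume "countable (Field W)"
  hence "|Field W| \<le>o natLeq" by (simp add: countable_card_le_natLeq)
  moreover have "|Field W| =o W" using card_of_Field_ordIso[OF W_card] .
  ultimately have "W \<le>o natLeq" using ordIso_ordLeq_trans ordIso_symmetric by blast
  moreover have "natLeq <o W" using cardSuc_greater[OF natLeq_Card_order] .
  ultimately show False using not_ordLess_ordLeq by blast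
qed

lemma W_refl: "b \<in> Field W \<Longrightarrow> (b,b) \<in> W"
  using W_wo unfolding well_order_on_def linear_order_on_def partial_order_on_def preorder_on_def refl_on_def by blast

lemma W_total: "a \<in> Field W \<Longrightarrow> b \<in> Field W \<Longrightarrow> (a,b) \<in> W \<or> (b,a) \<in> W"
  using W_wo unfolding well_order_on_def linear_order_on_def total_on_def
  by (metis W_refl)

lemma W_trans: "(a,b) \<in> W \<Longrightarrow> (b,c) \<in> W \<Longrightarrow> (a,c) \<in> W"
  using W_wo unfolding well_order_on_def linear_order_on_def partial_order_on_def preorder_on_def trans_def
  by blast

lemma W_antisym: "(a,b) \<in> W \<Longrightarrow> (b,a) \<in> W \<Longrightarrow> a = b"
  using W_wo unfolding well_order_on_def linear_order_on_def partial_order_on_def antisym_def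
  by blast

lemma W_bound:
  assumes "countable K" "K \<subseteq> Field W"
  shows "\<exists>g\<in>Field W. \<forall>b\<in>K. (b,g) \<in> W \<and> b \<noteq> g"
proof -
  let ?U = "\<Union>b\<in>K. insert b (underS W b)"
  have "countable ?U" using assms W_underS_countable by blast
  hence "Field W \<noteq> ?U" using W_uncountable by metis
  moreover have "?U \<subseteq> Field W" using assms by (auto simp: underS_def Field_def)
  ultimately obtain g where g: "g \<in> Field W" "g \<notin> ?U" by blast
  { fix b assume b: "b \<in> K"
    hence bF: "b \<in> Field W" using assms by auto
    have "g \<noteq> b" using g b by auto
    moreover have "(g,b) \<notin> W" using g b \<open>g\<noteq>b\<close> by (auto simp: underS_def)
    ultimately have "(b,g) \<in> W \<and> b \<noteq> g" using W_total[OF bF g(1)] by auto }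
  thus ?thesis using g by blast
qed

lemma W_nonempty: "Field W \<noteq> {}" using W_uncountable by auto

lemma split_infinite:
  fixes P :: "nat set" assumes "infinite P"
  shows "\<exists>Q\<subseteq>P. infinite Q \<and> infinite (P - Q)"
proof -
  let ?e = "enumerate P"
  have inj: "inj ?e" using inj_enumerate[OF assms] .
  have ev: "infinite {n::nat. even n}"
    unfolding infinite_nat_iff_unbounded
  proof (intro allI)
    fix m :: nat show "\<exists>n>m. n \<in> {n. even n}" by (rule exI[of _ "2*m+2"]) auto
  qed
  have od: "infinite {n::nat. odd n}"
    unfolding infinite_nat_iff_unbounded
  proof (intro allI)
    fix m :: nat show "\<exists>n>m. n \<in> {n. odd n}" by (rule exI[of _ "2*m+1"]) auto
  qed
  let ?Q = "?e ` {n. even n}"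
  have 1: "?Q \<subseteq> P" using enumerate_in_set[OF assms] by auto
  have 2: "infinite ?Q" using ev finite_imageD inj_on_subset[OF inj] by blast
  have 3: "?e ` {n. odd n} \<subseteq> P - ?Q"
  proof
    fix x assume "x \<in> ?e ` {n. odd n}"
    then obtain n where n: "odd n" "x = ?e n" by auto
    have "x \<in> P" using n enumerate_in_set[OF assms] by simp
    moreover have "x \<notin> ?Q"
    proof
      assume "x \<in> ?Q" then obtain m where "even m" "x = ?e m" by auto
      hence "m = n" using n inj injD by metis
      thus False using n \<open>even m\<close> by simp
    qed
    ultimately show "x \<in> P - ?Q" by simp
  qed
  have 4: "infinite (?e ` {n. odd n})" using od finite_imageD inj_on_subset[OF inj] by blast
  show ?thesis using 1 2 3 4 finite_subset by blast
qed

lemma pseudo_intersection: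
  fixes \<A> :: "nat set set"
  assumes cnt: "countable \<A>" and inf: "\<forall>A\<in>\<A>. infinite A"
    and chain: "\<forall>A\<in>\<A>. \<forall>B\<in>\<A>. finite (A - B) \<or> finite (B - A)"
  shows "\<exists>P. infinite P \<and> (\<forall>A\<in>\<A>. finite (P - A))"
proof (cases "\<A> = {}")
  case True thus ?thesis by auto
next
  case False
  define A where "A = from_nat_into \<A>"
  have AA: "A n \<in> \<A>" for n using False A_def from_nat_into by blast
  have rA: "\<A> = range A" using A_def range_from_nat_into[OF False cnt] by simp
  define B where "B n = (\<Inter>i\<in>{..n}. A i)" for n
  have claim: "\<exists>i\<le>n. finite (A i - B n)" for n
  proof (induction n)
    case 0 show ?case by (auto simp: B_def)
  next
    case (Suc n)
    then obtain i where i: "i \<le> n" "finite (A i - B n)" by blast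
    have BS: "B (Suc n) = B n \<inter> A (Suc n)" by (auto simp: B_def le_Suc_eq)
    show ?case
    proof (cases "finite (A i - A (Suc n))")
      case True
      have "A i - B (Suc n) \<subseteq> (A i - B n) \<union> (A i - A (Suc n))" using BS by auto
      thus ?thesis using True i by (meson finite_UnI finite_subset le_SucI)
    next
      case False
      hence f: "finite (A (Suc n) - A i)" using chain AA by blast
      have "A (Suc n) - B (Suc n) \<subseteq> (A (Suc n) - A i) \<union> (A i - B n)" using BS by auto
      thus ?thesis using f i by (meson finite_UnI finite_subset order_refl)
    qed
  qed
  have infB: "infinite (B n)" for n
  proof -
    obtain i where i: "finite (A i - B n)" using claim by blast
    have "A i \<subseteq> B n \<union> (A i - B n)" by auto
    thus ?thesis using i inf AA by (meson finite_UnI finite_subset)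
  qed
  have ex: "\<exists>x. x \<in> B m \<and> y < x" for m y using infB[of m] unfolding infinite_nat_iff_unbounded by blast
  define p where "p = rec_nat (SOME x. x \<in> B 0 \<and> 0 < x) (\<lambda>n y. SOME x. x \<in> B (Suc n) \<and> y < x)"
  have p0: "p 0 \<in> B 0" unfolding p_def using someI_ex[OF ex[of 0 0]] by simp
  have pS: "p (Suc n) \<in> B (Suc n) \<and> p n < p (Suc n)" for n
    unfolding p_def using someI_ex[OF ex[of "Suc n" "p n"]] by (simp add: p_def)
  have pB: "p n \<in> B n" for n by (cases n) (use p0 pS in auto)
  have sm: "strict_mono p" using pS by (simp add: strict_mono_Suc_iff)
  have "infinite (range p)" using sm range_inj_infinite strict_mono_imp_inj_on by blast
  moreover have "finite (range p - A k)" for k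
  proof -
    have "range p - A k \<subseteq> p ` {..<k}"
    proof
      fix x assume "x \<in> range p - A k"
      then obtain n where n: "x = p n" "x \<notin> A k" by auto
      have "n < k" proof (rule ccontr)
        assume "\<not> n < k" hence "k \<le> n" by simp
        hence "B n \<subseteq> A k" by (auto simp: B_def)
        thus False using pB n by auto
      qed
      thus "x \<in> p ` {..<k}" using n by auto
    qed
    thus ?thesis by (meson finite_imageI finite_lessThan finite_subset)
  qed
  ultimately show ?thesis using rA by auto
qed

definition step :: "(nat set \<Rightarrow> nat set) \<Rightarrow> nat set \<Rightarrow> nat set" where
  "step f a = (SOME P. infinite P \<and> (\<forall>b\<in>underS W a. finite (P - f b) \<and> infinite (f b - P)))"

definition H :: "nat set \<Rightarrow> nat set" where "H = wo_rel.worec W step"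

lemma H_fix: "H a = step H a"
proof -
  have wo: "wo_rel W" using W_wo by (simp add: wo_rel_def)
  have "wo_rel.adm_wo W step" unfolding wo_rel.adm_wo_def[OF wo] step_def by auto
  thus ?thesis unfolding H_def using wo_rel.worec_fixpoint[OF wo] by metis
qed

definition good where
  "good a \<longleftrightarrow> infinite (H a) \<and> (\<forall>b\<in>underS W a. finite (H a - H b) \<and> infinite (H b - H a))"

lemma H_good: "a \<in> Field W \<Longrightarrow> good a"
proof (induction a rule: wo_rel.well_order_induct[of W])
  case 1 show ?case using W_wo by (simp add: wo_rel_def)
next
  case (2 a)
  have IH: "good b" if "b \<in> underS W a" for b
    using 2 that by (auto simp: underS_def Field_def)
  let ?A = "H ` underS W a"
  have cnt: "countable ?A" using W_underS_countable 2 by blast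
  have inf: "\<forall>A\<in>?A. infinite A" using IH good_def by auto
  have chain: "\<forall>A\<in>?A. \<forall>B\<in>?A. finite (A - B) \<or> finite (B - A)"
  proof (intro ballI)
    fix A B assume "A \<in> ?A" "B \<in> ?A"
    then obtain b c where bc: "b \<in> underS W a" "c \<in> underS W a" "A = H b" "B = H c" by auto
    have F: "b \<in> Field W" "c \<in> Field W" using bc by (auto simp: underS_def Field_def)
    show "finite (A - B) \<or> finite (B - A)"
    proof (cases "b = c")
      case True thus ?thesis using bc by simp
    next
      case False
      then consider "(b,c) \<in> W" | "(c,b) \<in> W" using W_total F by blast
      thus ?thesis
      proof cases
        case 1 hence "b \<in> underS W c" using False by (simp add: underS_def)
        thus ?thesis using IH[OF bc(2)] bc by (auto simp: good_def)
      next
        case 2 hence "c \<in> underS W b" using False by (simp add: underS_def)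
        thus ?thesis using IH[OF bc(1)] bc by (auto simp: good_def)
      qed
    qed
  qed
  obtain P where P: "infinite P" "\<forall>A\<in>?A. finite (P - A)"
    using pseudo_intersection[OF cnt inf chain] by blast
  obtain Q where Q: "Q \<subseteq> P" "infinite Q" "infinite (P - Q)" using split_infinite[OF P(1)] by blast
  have ex: "\<exists>Q. infinite Q \<and> (\<forall>b\<in>underS W a. finite (Q - H b) \<and> infinite (H b - Q))"
  proof (intro exI conjI ballI)
    show "infinite Q" by fact
  next
    fix b assume b: "b \<in> underS W a"
    have f: "finite (P - H b)" using P b by auto
    show "finite (Q - H b)" using Q(1) f by (meson Diff_mono finite_subset order_refl)
    have "P - Q \<subseteq> (H b - Q) \<union> (P - H b)" by auto
    thus "infinite (H b - Q)" using Q(3) f by (meson finite_UnI finite_subset)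
  qed
  have "H a = step H a" by (rule H_fix)
  hence "infinite (H a) \<and> (\<forall>b\<in>underS W a. finite (H a - H b) \<and> infinite (H b - H a))"
    unfolding step_def using someI_ex[OF ex] by simp
  thus ?case by (simp add: good_def)
qed

definition fsp :: "'a set \<Rightarrow> 'a \<Rightarrow> 'a set set \<Rightarrow> 'a topology" where
  "fsp P z \<B> = topology (\<lambda>U. U \<subseteq> insert z P \<and> (z \<in> U \<longrightarrow> (\<exists>B\<in>\<B>. B \<subseteq> U)))"

definition fbase :: "'a set \<Rightarrow> 'a \<Rightarrow> 'a set set \<Rightarrow> bool" where
  "fbase P z \<B> \<longleftrightarrow> z \<notin> P \<and> \<B> \<noteq> {} \<and> (\<forall>B\<in>\<B>. B \<subseteq> P) \<and>
     (\<forall>B1\<in>\<B>. \<forall>B2\<in>\<B>. \<exists>B3\<in>\<B>. B3 \<subseteq> B1 \<inter> B2) \<and> (\<forall>p\<in>P. \<exists>B\<in>\<B>. p \<notin> B)"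

lemma openin_fsp:
  assumes "fbase P z \<B>"
  shows "openin (fsp P z \<B>) U \<longleftrightarrow> U \<subseteq> insert z P \<and> (z \<in> U \<longrightarrow> (\<exists>B\<in>\<B>. B \<subseteq> U))"
proof -
  define L where "L = (\<lambda>U. U \<subseteq> insert z P \<and> (z \<in> U \<longrightarrow> (\<exists>B\<in>\<B>. B \<subseteq> U)))"
  have i1: "L (S \<inter> T)" if S: "L S" and T: "L T" for S T
  proof -
    have "z \<in> S \<inter> T \<Longrightarrow> \<exists>B\<in>\<B>. B \<subseteq> S \<inter> T"
    proof -
      assume "z \<in> S \<inter> T"
      then obtain B1 B2 where "B1 \<in> \<B>" "B2 \<in> \<B>" "B1 \<subseteq> S" "B2 \<subseteq> T" using S T unfolding L_def by auto
      moreover then obtain B3 where "B3 \<in> \<B>" "B3 \<subseteq> B1 \<inter> B2" using assms unfolding fbase_def by meson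
      ultimately show "\<exists>B\<in>\<B>. B \<subseteq> S \<inter> T" by blast
    qed
    thus ?thesis using S unfolding L_def by auto
  qed
  have i2: "L (\<Union>K)" if K: "\<forall>U\<in>K. L U" for K
  proof -
    have "z \<in> \<Union>K \<Longrightarrow> \<exists>B\<in>\<B>. B \<subseteq> \<Union>K"
    proof -
      assume "z \<in> \<Union>K" then obtain U where U: "U \<in> K" "z \<in> U" by auto
      have "L U" using K U by simp
      then obtain B where "B \<in> \<B>" "B \<subseteq> U" using U unfolding L_def by auto
      thus "\<exists>B\<in>\<B>. B \<subseteq> \<Union>K" using U by auto
    qed
    thus ?thesis using K unfolding L_def by auto
  qed
  have "istopology L" unfolding istopology_def using i1 i2 by blast
  hence "openin (topology L) = L" by simp
  moreover have "fsp P z \<B> = topology L" unfolding fsp_def L_def by simp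
  ultimately have "openin (fsp P z \<B>) = L" by simp
  thus ?thesis by (simp add: L_def)
qed

lemma fbaseD:
  assumes "fbase P z \<B>"
  shows "z \<notin> P" "\<B> \<noteq> {}" "\<And>B. B \<in> \<B> \<Longrightarrow> B \<subseteq> P"
    "\<And>B1 B2. B1 \<in> \<B> \<Longrightarrow> B2 \<in> \<B> \<Longrightarrow> \<exists>B3\<in>\<B>. B3 \<subseteq> B1 \<inter> B2"
    "\<And>p. p \<in> P \<Longrightarrow> \<exists>B\<in>\<B>. p \<notin> B"
  using assms unfolding fbase_def by auto

lemma topspace_fsp:
  assumes "fbase P z \<B>" shows "topspace (fsp P z \<B>) = insert z P"
proof -
  obtain B where B: "B \<in> \<B>" using fbaseD(2)[OF assms] by blast
  have "B \<subseteq> insert z P" using fbaseD(3)[OF assms B] by blast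
  hence "openin (fsp P z \<B>) (insert z P)" unfolding openin_fsp[OF assms] using B by blast
  hence "insert z P \<subseteq> topspace (fsp P z \<B>)" by (rule openin_subset)
  moreover have "topspace (fsp P z \<B>) \<subseteq> insert z P"
    using openin_topspace[of "fsp P z \<B>"] openin_fsp[OF assms] by blast
  ultimately show ?thesis by blast
qed

lemma closure_fsp:
  assumes fb: "fbase P z \<B>"
  shows "x \<in> (fsp P z \<B>) closure_of A \<longleftrightarrow> x \<in> insert z P \<and> (x \<in> A \<or> (x = z \<and> (\<forall>B\<in>\<B>. B \<inter> A \<noteq> {})))"
proof
  assume x: "x \<in> (fsp P z \<B>) closure_of A"
  hence xt: "x \<in> insert z P" using topspace_fsp[OF fb] in_closure_of by metis
  show "x \<in> insert z P \<and> (x \<in> A \<or> (x = z \<and> (\<forall>B\<in>\<B>. B \<inter> A \<noteq> {})))"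
  proof (cases "x = z")
    case False
    hence "openin (fsp P z \<B>) {x}" using xt openin_fsp[OF fb] by auto
    hence "x \<in> A" using x in_closure_of by (metis singletonD singletonI)
    thus ?thesis using xt by simp
  next
    case True
    { assume nA: "x \<notin> A"
      fix B assume B: "B \<in> \<B>"
      have "B \<subseteq> P" using fbaseD(3)[OF fb B] .
      hence "openin (fsp P z \<B>) (insert z B)" unfolding openin_fsp[OF fb] using B by auto
      then obtain y where "y \<in> A" "y \<in> insert z B" using x True in_closure_of by (metis insertI1)
      hence "B \<inter> A \<noteq> {}" using nA True by auto }
    thus ?thesis using xt True by blast
  qed
next
  assume r: "x \<in> insert z P \<and> (x \<in> A \<or> (x = z \<and> (\<forall>B\<in>\<B>. B \<inter> A \<noteq> {})))"
  show "x \<in> (fsp P z \<B>) closure_of A"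
    unfolding in_closure_of topspace_fsp[OF fb]
  proof (intro conjI allI impI)
    show "x \<in> insert z P" using r by simp
    fix T assume T: "x \<in> T \<and> openin (fsp P z \<B>) T"
    show "\<exists>y. y \<in> A \<and> y \<in> T"
    proof (cases "x \<in> A")
      case True thus ?thesis using T by auto
    next
      case False
      hence xz: "x = z" and BA: "\<forall>B\<in>\<B>. B \<inter> A \<noteq> {}" using r by auto
      obtain B where "B \<in> \<B>" "B \<subseteq> T" using T xz openin_fsp[OF fb] by blast
      thus ?thesis using BA by blast
    qed
  qed
qed

lemma clopen_indicator_cont:
  assumes "openin X S" "openin X (topspace X - S)"
  shows "continuous_map X (top_of_set {0..1}) (\<lambda>w. if w \<in> S then (1::real) else 0)"
  unfolding continuous_map_def
proof (intro conjI allI impI)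
  show "(\<lambda>w. if w \<in> S then (1::real) else 0) \<in> topspace X \<rightarrow> topspace (top_of_set {0..1})" by auto
  fix U assume "openin (top_of_set {0..1::real}) U"
  have o1: "openin X (topspace X)" by simp
  have o2: "openin X (topspace X \<inter> S)" using assms(1) by (simp add: openin_subset inf.absorb2)
  consider "0 \<in> U" "1 \<in> U" | "0 \<in> U" "1 \<notin> U" | "0 \<notin> U" "1 \<in> U" | "0 \<notin> U" "1 \<notin> U" by blast
  thus "openin X {x \<in> topspace X. (if x \<in> S then (1::real) else 0) \<in> U}"
  proof cases
    case 1 hence eq: "{x \<in> topspace X. (if x \<in> S then (1::real) else 0) \<in> U} = topspace X" by auto
    show ?thesis unfolding eq by simp
  next
    case 2 hence eq: "{x \<in> topspace X. (if x \<in> S then (1::real) else 0) \<in> U} = topspace X - S" by auto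
    show ?thesis unfolding eq using assms by simp
  next
    case 3 hence eq: "{x \<in> topspace X. (if x \<in> S then (1::real) else 0) \<in> U} = topspace X \<inter> S" by auto
    show ?thesis unfolding eq using o2 by simp
  next
    case 4 hence eq: "{x \<in> topspace X. (if x \<in> S then (1::real) else 0) \<in> U} = {}" by auto
    show ?thesis unfolding eq by simp
  qed
qed

lemma tychonoff_fsp:
  assumes fb: "fbase P z \<B>" shows "tychonoff_space (fsp P z \<B>)"
  unfolding tychonoff_space_def
proof
  let ?X = "fsp P z \<B>"
  have ts: "topspace ?X = insert z P" by (rule topspace_fsp[OF fb])
  have zP: "z \<notin> P" using fbaseD(1)[OF fb] .
  have op: "openin ?X U \<longleftrightarrow> U \<subseteq> insert z P \<and> (z \<in> U \<longrightarrow> (\<exists>B\<in>\<B>. B \<subseteq> U))" for U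
    by (rule openin_fsp[OF fb])
  have free: "\<forall>p\<in>P. \<exists>B\<in>\<B>. p \<notin> B" and sub: "\<forall>B\<in>\<B>. B \<subseteq> P" using fbaseD[OF fb] by blast+
  show "completely_regular_space ?X"
    unfolding completely_regular_space_def
  proof (intro allI impI)
    fix C x assume Cx: "closedin ?X C \<and> x \<in> topspace ?X - C"
    have Ccl: "openin ?X (topspace ?X - C)" using Cx closedin_def by blast
    have Csub: "C \<subseteq> insert z P" using Cx closedin_subset ts by blast
    show "\<exists>f::'a\<Rightarrow>real. continuous_map ?X (top_of_set {0..1}) f \<and> f x = 0 \<and> f ` C \<subseteq> {1}"
    proof (cases "x = z")
      case True
      have "z \<notin> C" using Cx True by simp
      hence o1: "openin ?X C" using Csub op by blast
      define f where "f = (\<lambda>w. if w \<in> C then (1::real) else 0)"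
      have "continuous_map ?X (top_of_set {0..1}) f"
        unfolding f_def by (rule clopen_indicator_cont[OF o1 Ccl])
      moreover have "f x = 0" using \<open>z \<notin> C\<close> True by (simp add: f_def)
      moreover have "f ` C \<subseteq> {1}" by (auto simp: f_def)
      ultimately have "continuous_map ?X (top_of_set {0..1}) f \<and> f x = 0 \<and> f ` C \<subseteq> {1}" by simp
      thus ?thesis by blast
    next
      case False
      hence xP: "x \<in> P" using Cx ts by auto
      let ?S = "insert z P - {x}"
      obtain B where B: "B \<in> \<B>" "x \<notin> B" using free xP by blast
      have o1: "openin ?X ?S" unfolding op using B sub zP by blast
      have "topspace ?X - ?S = {x}" using ts xP by auto
      moreover have "openin ?X {x}" unfolding op using xP False by auto
      ultimately have o2: "openin ?X (topspace ?X - ?S)" by simp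
      define f where "f = (\<lambda>w. if w \<in> ?S then (1::real) else 0)"
      have "continuous_map ?X (top_of_set {0..1}) f"
        unfolding f_def by (rule clopen_indicator_cont[OF o1 o2])
      moreover have "C \<subseteq> ?S" using Csub Cx by auto
      moreover have "f x = 0" by (simp add: f_def)
      moreover have "f ` C \<subseteq> {1}" using \<open>C \<subseteq> ?S\<close> by (auto simp: f_def)
      ultimately have "continuous_map ?X (top_of_set {0..1}) f \<and> f x = 0 \<and> f ` C \<subseteq> {1}" by simp
      thus ?thesis by blast
    qed
  qed
  show "t1_space ?X"
    unfolding t1_space_def ts
  proof (intro ballI impI)
    fix x y assume xy: "x \<in> insert z P" "y \<in> insert z P" "x \<noteq> y"
    show "\<exists>U. openin ?X U \<and> x \<in> U \<and> y \<notin> U"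
    proof (cases "x = z")
      case True
      hence yP: "y \<in> P" using xy by auto
      obtain B where B: "B \<in> \<B>" "y \<notin> B" using free yP by blast
      have "openin ?X (insert z B)" unfolding op using B sub by blast
      moreover have "x \<in> insert z B" "y \<notin> insert z B" using True B xy by auto
      ultimately show ?thesis by blast
    next
      case False
      have "openin ?X {x}" unfolding op using xy False by auto
      moreover have "x \<in> {x}" "y \<notin> {x}" using xy by auto
      ultimately show ?thesis by blast
    qed
  qed
qed

definition Dy :: "int \<Rightarrow> nat \<Rightarrow> real set" where
  "Dy a L = {r. \<lfloor>(2::real)^L * r\<rfloor> = a}"

lemma floor_shift:
  assumes "L \<le> L'"
  shows "\<lfloor>(2::real)^L * r\<rfloor> = \<lfloor>(2::real)^L' * r\<rfloor> div 2^(L'-L)"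
proof -
  have e: "(2::real)^L' = 2^L * 2^(L'-L)" using assms by (simp add: power_add[symmetric])
  have "(2::real)^L * r = ((2::real)^L' * r) / real_of_int (2^(L'-L))"
    unfolding e by simp
  thus ?thesis using floor_divide_real_eq_div[of "2^(L'-L)" "(2::real)^L' * r"] by simp
qed

lemma Dy_sub:
  assumes "L \<le> L'" "a' div 2^(L'-L) = a"
  shows "Dy a' L' \<subseteq> Dy a L"
  using floor_shift[OF assms(1)] assms(2) by (auto simp: Dy_def)

lemma Dy_floor: "r \<in> Dy a L \<Longrightarrow> i \<le> L \<Longrightarrow> \<lfloor>(2::real)^i * r\<rfloor> = a div 2^(L-i)"
  using floor_shift[of i L r] by (simp add: Dy_def)

lemma Dy_mem: "real_of_int a / 2^L \<in> Dy a L"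
  by (simp add: Dy_def)

definition dig :: "real \<Rightarrow> nat \<Rightarrow> nat" where
  "dig r i = nat (\<lfloor>(2::real)^i * r\<rfloor> mod 2)"

lemma dig_le1: "dig r i \<le> 1"
  unfolding dig_def by (simp add: nat_le_iff)

primrec ones :: "real \<Rightarrow> nat \<Rightarrow> nat" where
  "ones r 0 = 0"
| "ones r (Suc i) = ones r i + dig r (Suc i)"

definition code :: "real \<Rightarrow> nat \<Rightarrow> nat" where
  "code r n = card {i. 1 \<le> i \<and> dig r i = 0 \<and> ones r i = n}"

lemma ones_mono: "i \<le> j \<Longrightarrow> ones r i \<le> ones r j"
proof (induction j)
  case 0 thus ?case by simp
next
  case (Suc j) thus ?case by (cases "i = Suc j") auto
qed

lemma same_dig: "r \<in> Dy a L \<Longrightarrow> r' \<in> Dy a L \<Longrightarrow> i \<le> L \<Longrightarrow> dig r i = dig r' i"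
  unfolding dig_def using Dy_floor by metis

lemma same_ones: "r \<in> Dy a L \<Longrightarrow> r' \<in> Dy a L \<Longrightarrow> i \<le> L \<Longrightarrow> ones r i = ones r' i"
proof (induction i)
  case 0 thus ?case by simp
next
  case (Suc i) thus ?case using same_dig[of r a L r' "Suc i"] by simp
qed

lemma code_prefix:
  assumes r: "r \<in> Dy a L" and r': "r' \<in> Dy a L" and n: "n < ones r L"
  shows "code r n = code r' n"
proof -
  have oL: "ones r' L = ones r L" using same_ones[OF r' r] by simp
  have "{i. 1 \<le> i \<and> dig r i = 0 \<and> ones r i = n} = {i. 1 \<le> i \<and> dig r' i = 0 \<and> ones r' i = n}"
  proof (intro set_eqI iffI)
    fix i assume i: "i \<in> {i. 1 \<le> i \<and> dig r i = 0 \<and> ones r i = n}"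
    have "i \<le> L" proof (rule ccontr)
      assume "\<not> i \<le> L" hence "ones r L \<le> ones r i" using ones_mono by simp
      thus False using i n by simp
    qed
    thus "i \<in> {i. 1 \<le> i \<and> dig r' i = 0 \<and> ones r' i = n}"
      using i same_dig[OF r r'] same_ones[OF r r'] by auto
  next
    fix i assume i: "i \<in> {i. 1 \<le> i \<and> dig r' i = 0 \<and> ones r' i = n}"
    have "i \<le> L" proof (rule ccontr)
      assume "\<not> i \<le> L" hence "ones r' L \<le> ones r' i" using ones_mono by simp
      thus False using i n oL by simp
    qed
    thus "i \<in> {i. 1 \<le> i \<and> dig r i = 0 \<and> ones r i = n}"
      using i same_dig[OF r r'] same_ones[OF r r'] by auto
  qed
  thus ?thesis unfolding code_def by simp
qed

lemma div_aux: "(1::int) < d \<Longrightarrow> (c * d + 1) div d = c"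
  by simp

lemma mod_aux: "(c * 2 + 1) mod 2 = (1::int)" by simp

lemma code_ext:
  assumes odd: "a1 mod 2 = 1" and r: "r \<in> Dy (a1 * 2^(Suc j) + 1) (Suc L + Suc j)"
  shows "code r (ones r (Suc L)) = j"
proof -
  let ?L1 = "Suc L" and ?a2 = "a1 * 2^(Suc j) + 1"
  have fl: "\<lfloor>(2::real)^(?L1 + t) * r\<rfloor> = ?a2 div 2^(Suc j - t)" if "t \<le> Suc j" for t
    using Dy_floor[OF r, of "?L1 + t"] that by simp
  have d0: "dig r ?L1 = 1"
  proof -
    have h: "(1::int) < 2^Suc j" using one_less_power[of "2::int" "Suc j"] by simp
    have "\<lfloor>(2::real)^(?L1 + 0) * r\<rfloor> = ?a2 div 2^Suc j" using fl[of 0] by simp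
    also have "... = a1" using div_aux[OF h, of a1] by (simp only:)
    finally have "\<lfloor>(2::real)^(?L1 + 0) * r\<rfloor> = a1" .
    thus ?thesis using odd unfolding dig_def by simp
  qed
  have dmid: "dig r (?L1 + t) = 0" if "1 \<le> t" "t \<le> j" for t
  proof -
    have e: "?a2 = (a1 * 2^t) * 2^(Suc j - t) + 1" using that
      by (simp add: power_add[symmetric])
    have h: "(1::int) < 2^(Suc j - t)" using that one_less_power[of "2::int" "Suc j - t"] by simp
    have "\<lfloor>(2::real)^(?L1 + t) * r\<rfloor> = ?a2 div 2^(Suc j - t)" using fl[of t] that by simp
    also have "... = ((a1 * 2^t) * 2^(Suc j - t) + 1) div 2^(Suc j - t)" using e by (simp only:)
    also have "... = a1 * 2^t" by (rule div_aux[OF h])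
    finally have "\<lfloor>(2::real)^(?L1 + t) * r\<rfloor> = a1 * 2^t" .
    moreover have "(a1 * 2^t) mod 2 = 0" using that by (simp add: power_0_left)
    ultimately show ?thesis unfolding dig_def by simp
  qed
  have dend: "dig r (?L1 + Suc j) = 1"
  proof -
    have "\<lfloor>(2::real)^(?L1 + Suc j) * r\<rfloor> = ?a2" using fl[of "Suc j"] by simp
    moreover have "?a2 mod 2 = 1"
    proof -
      have e: "?a2 = (a1 * 2^j) * 2 + 1" by simp
      show ?thesis unfolding e by (rule mod_aux)
    qed
    ultimately show ?thesis unfolding dig_def by simp
  qed
  let ?m = "ones r ?L1"
  have omid: "ones r (?L1 + t) = ?m" if "t \<le> j" for t
    using that proof (induction t)
    case 0 thus ?case by simp
  next
    case (Suc t) thus ?case using dmid[of "Suc t"] by simp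
  qed
  have oend: "ones r (?L1 + Suc j) = Suc ?m"
    using omid[of j] dend by simp
  have S: "{i. 1 \<le> i \<and> dig r i = 0 \<and> ones r i = ?m} = {?L1 + 1 .. ?L1 + j}"
  proof (intro set_eqI iffI)
    fix i assume i: "i \<in> {i. 1 \<le> i \<and> dig r i = 0 \<and> ones r i = ?m}"
    have "i \<noteq> ?L1" using i d0 by auto
    moreover have "\<not> i < ?L1"
    proof
      assume "i < ?L1" hence "i \<le> L" by simp
      hence "ones r i \<le> ones r L" by (rule ones_mono)
      moreover have "ones r ?L1 = ones r L + 1" using d0 by simp
      ultimately show False using i by simp
    qed
    moreover have "\<not> i \<ge> ?L1 + Suc j"
    proof
      assume "i \<ge> ?L1 + Suc j"
      hence "ones r (?L1 + Suc j) \<le> ones r i" by (rule ones_mono)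
      thus False using i oend by simp
    qed
    ultimately show "i \<in> {?L1 + 1 .. ?L1 + j}" by auto
  next
    fix i assume i: "i \<in> {?L1 + 1 .. ?L1 + j}"
    define t where "t = i - ?L1"
    have t: "i = ?L1 + t" "1 \<le> t" "t \<le> j" using i unfolding t_def by auto
    have a: "dig r (?L1+t) = 0" by (rule dmid[OF t(2,3)])
    have b: "ones r (?L1+t) = ?m" by (rule omid[OF t(3)])
    show "i \<in> {i. 1 \<le> i \<and> dig r i = 0 \<and> ones r i = ?m}"
      unfolding t(1) mem_Collect_eq
    proof (intro conjI)
      show "1 \<le> ?L1 + t" by simp
    qed (rule a, rule b)
  qed
  show ?thesis unfolding code_def S by simp
qed

lemma nd_from_dyadic:
  assumes H: "\<And>a L. \<exists>a' L'. Dy a' L' \<subseteq> Dy a L \<and> Dy a' L' \<inter> M = {}"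
  shows "nowhere_dense_real M"
  unfolding nowhere_dense_real_def
proof (rule ccontr)
  assume "interior (closure M) \<noteq> {}"
  then obtain x where "x \<in> interior (closure M)" by blast
  then obtain e where e: "e > 0" "ball x e \<subseteq> closure M" using mem_interior by blast
  obtain L where L: "(1/2::real)^L < e" using real_arch_pow_inv[OF e(1), of "1/2"] by auto
  define a where "a = \<lfloor>(2::real)^L * x\<rfloor>"
  have sub: "Dy a L \<subseteq> ball x e"
  proof
    fix r assume "r \<in> Dy a L"
    hence "\<lfloor>(2::real)^L * r\<rfloor> = a" by (simp add: Dy_def)
    hence "real_of_int a \<le> 2^L * r" "2^L * r < real_of_int a + 1" "real_of_int a \<le> 2^L * x" "2^L * x < real_of_int a + 1"
      using a_def floor_eq_iff by (metis, metis, metis, metis)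
    hence "\<bar>2^L * r - 2^L * x\<bar> < (1::real)" by linarith
    hence "2^L * \<bar>r - x\<bar> < (1::real)" by (simp add: abs_mult right_diff_distrib[symmetric])
    hence "\<bar>r - x\<bar> < 1 / 2^L" by (simp add: field_simps)
    also have "1 / 2^L = (1/2::real)^L" by (simp add: power_divide)
    finally show "r \<in> ball x e" using L by (simp add: dist_real_def abs_minus_commute)
  qed
  obtain a' L' where D: "Dy a' L' \<subseteq> Dy a L" "Dy a' L' \<inter> M = {}" using H by blast
  define Oi where "Oi = {real_of_int a' / 2^L' <..< (real_of_int a' + 1) / 2^L'}"
  have Oo: "open Oi" unfolding Oi_def by simp
  have OD: "Oi \<subseteq> Dy a' L'"
  proof
    fix r assume "r \<in> Oi"
    hence "real_of_int a' < 2^L' * r" "2^L' * r < real_of_int a' + 1"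
      unfolding Oi_def by (simp_all add: field_simps)
    hence "\<lfloor>(2::real)^L' * r\<rfloor> = a'" by (simp add: floor_eq_iff)
    thus "r \<in> Dy a' L'" by (simp add: Dy_def)
  qed
  define c where "c = (real_of_int a' + 1/2) / 2^L'"
  have cO: "c \<in> Oi" unfolding Oi_def c_def by (simp add: field_simps)
  have "c \<in> closure M" using cO OD D(1) sub e(2) by blast
  hence "Oi \<inter> closure M \<noteq> {}" using cO by blast
  hence "Oi \<inter> M \<noteq> {}" using open_Int_closure_eq_empty[OF Oo] by blast
  thus False using OD D(2) by blast
qed

primrec pl :: "('a list \<Rightarrow> nat \<Rightarrow> 'a) \<Rightarrow> (nat \<Rightarrow> nat) \<Rightarrow> nat \<Rightarrow> 'a list" where
  "pl e g 0 = []"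
| "pl e g (Suc n) = pl e g n @ [e (pl e g n) (g n)]"

definition mv :: "('a list \<Rightarrow> nat \<Rightarrow> 'a) \<Rightarrow> (nat \<Rightarrow> nat) \<Rightarrow> nat \<Rightarrow> 'a" where
  "mv e g n = e (pl e g n) (g n)"

lemma pl_map: "pl e g n = map (mv e g) [0..<n]"
  by (induction n) (simp_all add: mv_def)

lemma pl_cong: "(\<And>i. i < n \<Longrightarrow> g i = g' i) \<Longrightarrow> pl e g n = pl e g' n"
  by (induction n) auto

lemma game_lemma:
  fixes \<B> :: "'a set set" and I :: "'i set" and gB :: "'i \<Rightarrow> 'a set"
  assumes cov: "covM_gt_aleph1" and fb: "fbase P z \<B>" and cP: "countable P"
    and BI: "\<B> = gB ` I" and card: "|I| \<le>o cardSuc natLeq"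
  shows "\<not> playerI_wins_G1_Omega (fsp P z \<B>) z"
proof
  let ?X = "fsp P z \<B>"
  have ts: "topspace ?X = insert z P" by (rule topspace_fsp[OF fb])
  have zP: "z \<notin> P" by (rule fbaseD(1)[OF fb])
  assume "playerI_wins_G1_Omega ?X z"
  then obtain \<sigma> where s1: "\<And>s. \<sigma> s \<in> Omega_at ?X z"
    and s2: "\<And>a. (\<forall>n. a n \<in> \<sigma> (map a [0..<n])) \<Longrightarrow> range a \<notin> Omega_at ?X z"
    unfolding playerI_wins_G1_Omega_def by blast
  have sP: "\<sigma> s \<subseteq> P" for s using s1[of s] ts unfolding Omega_at_def by auto
  have meet: "B \<inter> \<sigma> s \<noteq> {}" if "B \<in> \<B>" for B s
  proof -
    have "z \<in> ?X closure_of \<sigma> s" "z \<notin> \<sigma> s" using s1[of s] unfolding Omega_at_def by auto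
    thus ?thesis using that closure_fsp[OF fb] by blast
  qed
  have ne: "\<sigma> s \<noteq> {}" for s
  proof -
    obtain B where "B \<in> \<B>" using fbaseD(2)[OF fb] by blast
    thus ?thesis using meet by blast
  qed
  have cs: "countable (\<sigma> s)" for s using sP cP countable_subset by blast
  define e where "e s n = from_nat_into (\<sigma> s) n" for s n
  have re: "range (e s) = \<sigma> s" for s
    unfolding e_def using range_from_nat_into[OF ne cs] by simp
  have bad: "\<exists>i\<in>I. gB i \<inter> range (mv e g) = {}" for g
  proof -
    let ?a = "mv e g"
    have "\<forall>n. ?a n \<in> \<sigma> (map ?a [0..<n])"
    proof
      fix n
      have "?a n = e (map ?a [0..<n]) (g n)" unfolding mv_def pl_map[symmetric] ..
      thus "?a n \<in> \<sigma> (map ?a [0..<n])" using re by (metis rangeI)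
    qed
    hence nO: "range ?a \<notin> Omega_at ?X z" by (rule s2)
    have rP: "range ?a \<subseteq> P"
    proof
      fix x assume "x \<in> range ?a"
      then obtain n where "x = ?a n" by auto
      thus "x \<in> P" using re sP unfolding mv_def by blast
    qed
    hence "range ?a \<subseteq> topspace ?X" "z \<notin> range ?a" using ts zP by auto
    hence "z \<notin> ?X closure_of range ?a" using nO unfolding Omega_at_def by blast
    hence "\<exists>B\<in>\<B>. B \<inter> range ?a = {}" using closure_fsp[OF fb, of z "range ?a"] \<open>z \<notin> range ?a\<close> by blast
    thus ?thesis using BI by blast
  qed
  define M where "M i = {r. gB i \<inter> range (mv e (code r)) = {}}" for i
  have cover: "\<Union>(M ` I) = UNIV" using bad unfolding M_def by blast
  have nd: "nowhere_dense_real (M i)" if iI: "i \<in> I" for i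
  proof (rule nd_from_dyadic)
    fix a :: int and L :: nat
    define a1 where "a1 = 2 * a + 1"
    define r0 where "r0 = real_of_int a1 / 2^Suc L"
    have r0D: "r0 \<in> Dy a1 (Suc L)" unfolding r0_def by (rule Dy_mem)
    define m where "m = ones r0 (Suc L)"
    define t where "t = pl e (code r0) m"
    have "gB i \<in> \<B>" using iI BI by blast
    hence "gB i \<inter> range (e t) \<noteq> {}" using meet re by simp
    then obtain j where j: "e t j \<in> gB i" by blast
    define a2 where "a2 = a1 * 2^Suc j + 1"
    have odd: "a1 mod 2 = 1" unfolding a1_def by simp
    have h: "(1::int) < 2^Suc j" using one_less_power[of "2::int" "Suc j"] by simp
    have ee: "(Suc L + Suc j) - Suc L = Suc j" by simp
    have q: "a2 div 2^((Suc L + Suc j) - Suc L) = a1" unfolding ee a2_def by (rule div_aux[OF h])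
    have sub1: "Dy a2 (Suc L + Suc j) \<subseteq> Dy a1 (Suc L)"
      by (rule Dy_sub[OF _ q]) simp
    have sub2: "Dy a1 (Suc L) \<subseteq> Dy a L"
      by (rule Dy_sub) (simp_all add: a1_def)
    have disj: "Dy a2 (Suc L + Suc j) \<inter> M i = {}"
    proof (rule ccontr)
      assume "Dy a2 (Suc L + Suc j) \<inter> M i \<noteq> {}"
      then obtain r where r: "r \<in> Dy a2 (Suc L + Suc j)" "r \<in> M i" by blast
      have r1: "r \<in> Dy a1 (Suc L)" using r sub1 by blast
      have om: "ones r (Suc L) = m" unfolding m_def by (rule same_ones[OF r1 r0D order_refl])
      have "code r n = code r0 n" if "n < m" for n
        using code_prefix[OF r0D r1] that unfolding m_def by simp
      hence pt: "pl e (code r) m = t" unfolding t_def by (rule pl_cong)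
      have "code r (ones r (Suc L)) = j" using code_ext[OF odd, where r=r and j=j and L=L] r(1) unfolding a2_def by blast
      hence cj: "code r m = j" unfolding om .
      have "mv e (code r) m = e t j" unfolding mv_def pt cj ..
      hence "mv e (code r) m \<in> gB i" using j by simp
      thus False using r(2) unfolding M_def by blast
    qed
    show "\<exists>a' L'. Dy a' L' \<subseteq> Dy a L \<and> Dy a' L' \<inter> M i = {}"
      using sub1 sub2 disj by blast
  qed
  have mg: "\<forall>S\<in>M ` I. meager_real S"
  proof
    fix S assume "S \<in> M ` I"
    then obtain i where "i \<in> I" "S = M i" by blast
    hence "nowhere_dense_real S" using nd by simp
    thus "meager_real S" unfolding meager_real_def by (intro exI[of _ "\<lambda>n. S"]) auto
  qed
  have "|M ` I| \<le>o cardSuc natLeq" using card_of_image ordLeq_transitive card by blast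
  thus False using cov mg cover unfolding covM_gt_aleph1_def by blast
qed

definition encX :: "nat \<Rightarrow> real set set" where "encX n = {{real n}}"
definition PX :: "real set set set" where "PX = range encX"
definition BX :: "real set set set set" where
  "BX = (\<lambda>(a,k). encX ` (H a - {..<k})) ` (Field W \<times> UNIV)"

definition encY :: "nat set \<times> nat \<Rightarrow> real set set" where
  "encY = (\<lambda>(a,n). insert {-1 - real n} ((\<lambda>m. {real m}) ` a))"
definition PY :: "real set set set" where "PY = encY ` (Field W \<times> UNIV)"
definition BY :: "real set set set set" where
  "BY = (\<lambda>f. encY ` {(a,n). a \<in> Field W \<and> f a \<le> n}) ` UNIV"

lemma inj_encX: "inj encX" unfolding inj_def encX_def by simp

lemma encX_ne: "encX n \<noteq> {}" by (simp add: encX_def)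

lemma encY_ne: "encY q \<noteq> {}" by (cases q) (simp add: encY_def)

lemma inj_encY: "inj encY"
proof (rule injI)
  fix q q' assume eq: "encY q = encY q'"
  obtain a n where q: "q = (a,n)" by (cases q)
  obtain a' n' where q': "q' = (a',n')" by (cases q')
  have e: "insert {-1 - real n} ((\<lambda>m. {real m}) ` a) = insert {-1 - real n'} ((\<lambda>m. {real m}) ` a')"
    using eq q q' by (simp add: encY_def)
  have neg: "{-1 - real k} \<noteq> {real m}" for k m :: nat by auto
  have "{-1 - real n} \<in> insert {-1 - real n'} ((\<lambda>m. {real m}) ` a')" using e by blast
  hence nn: "n = n'" using neg by auto
  have "m \<in> a \<longleftrightarrow> m \<in> a'" for m
  proof -
    have "m \<in> a \<longleftrightarrow> {real m} \<in> insert {-1 - real n} ((\<lambda>m. {real m}) ` a)" using neg by auto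
    also have "\<dots> \<longleftrightarrow> {real m} \<in> insert {-1 - real n'} ((\<lambda>m. {real m}) ` a')" using e by simp
    also have "\<dots> \<longleftrightarrow> m \<in> a'" using neg by auto
    finally show ?thesis .
  qed
  hence "a = a'" by blast
  thus "q = q'" using q q' nn by simp
qed

lemma H_cmp:
  assumes "a \<in> Field W" "b \<in> Field W"
  shows "\<exists>c\<in>Field W. finite (H c - H a) \<and> finite (H c - H b)"
proof (cases "a = b")
  case True thus ?thesis using assms by (intro bexI[of _ b]) auto
next
  case False
  then consider "(a,b) \<in> W" | "(b,a) \<in> W" using W_total assms by blast
  thus ?thesis
  proof cases
    case 1 hence "a \<in> underS W b" using False by (simp add: underS_def)
    hence "finite (H b - H a)" using H_good[OF assms(2)] by (simp add: good_def)
    thus ?thesis using assms by auto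
  next
    case 2 hence "b \<in> underS W a" using False by (simp add: underS_def)
    hence "finite (H a - H b)" using H_good[OF assms(1)] by (simp add: good_def)
    thus ?thesis using assms by (intro bexI[of _ a]) auto
  qed
qed

lemma fbX: "fbase PX {} BX"
  unfolding fbase_def
proof (intro conjI ballI)
  show "{} \<notin> PX" unfolding PX_def using encX_ne by auto
  show "BX \<noteq> {}" unfolding BX_def using W_nonempty by auto
next
  fix B assume "B \<in> BX" thus "B \<subseteq> PX" unfolding BX_def PX_def by auto
next
  fix B1 B2 assume B: "B1 \<in> BX" "B2 \<in> BX"
  then obtain a k b l where ab: "a \<in> Field W" "b \<in> Field W"
    "B1 = encX ` (H a - {..<k})" "B2 = encX ` (H b - {..<l})" unfolding BX_def by auto
  obtain c where c: "c \<in> Field W" "finite (H c - H a)" "finite (H c - H b)" using H_cmp[OF ab(1,2)] by blast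
  have "finite ((H c - H a) \<union> (H c - H b) \<union> {..<k} \<union> {..<l})" using c by simp
  then obtain K where K: "\<forall>x\<in>(H c - H a) \<union> (H c - H b) \<union> {..<k} \<union> {..<l}. x < K"
    using finite_nat_set_iff_bounded by blast
  have "H c - {..<K} \<subseteq> (H a - {..<k}) \<inter> (H b - {..<l})"
  proof
    fix x assume x: "x \<in> H c - {..<K}"
    hence "\<not> x < K" by simp
    hence "x \<notin> (H c - H a) \<union> (H c - H b) \<union> {..<k} \<union> {..<l}" using K by blast
    thus "x \<in> (H a - {..<k}) \<inter> (H b - {..<l})" using x by auto
  qed
  hence "encX ` (H c - {..<K}) \<subseteq> B1 \<inter> B2" using ab by auto
  moreover have "encX ` (H c - {..<K}) \<in> BX" unfolding BX_def
    by (rule image_eqI[where x="(c,K)"]) (simp_all add: c(1))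
  ultimately show "\<exists>B3\<in>BX. B3 \<subseteq> B1 \<inter> B2" by blast
next
  fix p assume "p \<in> PX"
  then obtain n where n: "p = encX n" unfolding PX_def by auto
  obtain a where a: "a \<in> Field W" using W_nonempty by blast
  have "encX ` (H a - {..<Suc n}) \<in> BX" unfolding BX_def
    by (rule image_eqI[where x="(a,Suc n)"]) (simp_all add: a)
  moreover have "p \<notin> encX ` (H a - {..<Suc n})"
  proof
    assume "p \<in> encX ` (H a - {..<Suc n})"
    then obtain m where m: "p = encX m" "m \<in> H a - {..<Suc n}" by auto
    hence "n = m" using n inj_encX by (metis injD)
    thus False using m by simp
  qed
  ultimately show "\<exists>B\<in>BX. p \<notin> B" by blast
qed

lemma fbY: "fbase PY {} BY"
  unfolding fbase_def
proof (intro conjI ballI)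
  show "{} \<notin> PY" unfolding PY_def using encY_ne by auto
  show "BY \<noteq> {}" unfolding BY_def by auto
next
  fix B assume "B \<in> BY" thus "B \<subseteq> PY" unfolding BY_def PY_def by auto
next
  fix B1 B2 assume B: "B1 \<in> BY" "B2 \<in> BY"
  then obtain f g where fg: "B1 = encY ` {(a,n). a \<in> Field W \<and> f a \<le> n}"
    "B2 = encY ` {(a,n). a \<in> Field W \<and> g a \<le> n}" unfolding BY_def by auto
  let ?h = "\<lambda>a. max (f a) (g a)"
  have "encY ` {(a,n). a \<in> Field W \<and> ?h a \<le> n} \<subseteq> B1 \<inter> B2" using fg by auto
  moreover have "encY ` {(a,n). a \<in> Field W \<and> ?h a \<le> n} \<in> BY" unfolding BY_def by (rule image_eqI[where x="?h"]) simp_all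
  ultimately show "\<exists>B3\<in>BY. B3 \<subseteq> B1 \<inter> B2" by blast
next
  fix p assume "p \<in> PY"
  then obtain a n where n: "p = encY (a,n)" unfolding PY_def by auto
  have "encY ` {(a,m). a \<in> Field W \<and> (\<lambda>_. Suc n) a \<le> m} \<in> BY" unfolding BY_def
    by (rule image_eqI[where x="\<lambda>_. Suc n"]) simp_all
  moreover have "p \<notin> encY ` {(a,m). a \<in> Field W \<and> (\<lambda>_. Suc n) a \<le> m}"
  proof
    assume "p \<in> encY ` {(a,m). a \<in> Field W \<and> (\<lambda>_. Suc n) a \<le> m}"
    then obtain a' m where am: "p = encY (a',m)" "Suc n \<le> m" by auto
    hence "(a,n) = (a',m)" using n inj_encY by (metis injD)
    thus False using am by simp
  qed
  ultimately show "\<exists>B\<in>BY. p \<notin> B" by blast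
qed

lemma card_FW: "|Field W \<times> (UNIV::nat set)| \<le>o W"
proof -
  have inf: "\<not> finite (Field W)" using W_uncountable countable_finite by blast
  have "|UNIV::nat set| \<le>o |Field W|"
  proof (rule ccontr)
    assume "\<not> |UNIV::nat set| \<le>o |Field W|"
    hence "|Field W| <o |UNIV::nat set|" using not_ordLeq_iff_ordLess[OF card_of_Well_order card_of_Well_order] by blast
    hence "|Field W| \<le>o |UNIV::nat set|" by (rule ordLess_imp_ordLeq)
    hence "countable (Field W)" by (simp add: countable_card_of_nat)
    thus False using W_uncountable by blast
  qed
  hence 1: "|Field W \<times> (UNIV::nat set)| =o |Field W|" using card_of_Times_infinite[OF inf UNIV_not_empty] by blast
  have 2: "|Field W| =o W" using card_of_Field_ordIso[OF W_card] .
  have "|Field W \<times> (UNIV::nat set)| =o W" by (rule ordIso_transitive[OF 1 2])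
  thus ?thesis by (rule ordIso_imp_ordLeq)
qed

definition sc :: "nat set \<Rightarrow> nat set" where
  "sc a = (SOME g. g \<in> Field W \<and> (a,g) \<in> W \<and> a \<noteq> g)"

lemma sc_prop: assumes "a \<in> Field W" shows "sc a \<in> Field W" "(a, sc a) \<in> W" "a \<noteq> sc a"
proof -
  have "\<exists>g. g \<in> Field W \<and> (a,g) \<in> W \<and> a \<noteq> g" using W_bound[of "{a}"] assms by auto
  from someI_ex[OF this] show "sc a \<in> Field W" "(a, sc a) \<in> W" "a \<noteq> sc a" unfolding sc_def by auto
qed

definition E :: "nat set \<Rightarrow> nat set" where "E a = H a - H (sc a)"

lemma E_inf: assumes "a \<in> Field W" shows "infinite (E a)"
proof -
  have "a \<in> underS W (sc a)" using sc_prop[OF assms] by (simp add: underS_def)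
  thus ?thesis using H_good[OF sc_prop(1)[OF assms]] unfolding good_def E_def by blast
qed

abbreviation Xs :: "real set set topology" where "Xs \<equiv> fsp PX {} BX"
abbreviation Ys :: "real set set topology" where "Ys \<equiv> fsp PY {} BY"

lemma Y_tight: "countably_tight Ys"
  unfolding countably_tight_def
proof (intro allI impI)
  fix A y assume Ay: "A \<subseteq> topspace Ys \<and> y \<in> Ys closure_of A"
  have c: "y \<in> insert {} PY \<and> (y \<in> A \<or> (y = {} \<and> (\<forall>B\<in>BY. B \<inter> A \<noteq> {})))"
    using Ay closure_fsp[OF fbY, of y A] by blast
  show "\<exists>B. B \<subseteq> A \<and> countable B \<and> y \<in> Ys closure_of B"
  proof (cases "y \<in> A")
    case True
    have "y \<in> Ys closure_of {y}" using c closure_fsp[OF fbY, of y "{y}"] by blast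
    thus ?thesis using True by (intro exI[of _ "{y}"]) auto
  next
    case False
    hence yz: "y = {}" and mt: "\<forall>B\<in>BY. B \<inter> A \<noteq> {}" using c by auto
    define Col where "Col a = {n. encY (a,n) \<in> A}" for a
    have "\<exists>a\<in>Field W. infinite (Col a)"
    proof (rule ccontr)
      assume "\<not> (\<exists>a\<in>Field W. infinite (Col a))"
      hence fin: "\<And>a. a \<in> Field W \<Longrightarrow> finite (Col a)" by blast
      define f where "f a = (SOME m. \<forall>x\<in>Col a. x < m)" for a
      have fp: "x < f a" if "a \<in> Field W" "x \<in> Col a" for a x
      proof -
        have "\<exists>m. \<forall>x\<in>Col a. x < m" using fin[OF that(1)] finite_nat_set_iff_bounded by blast
        from someI_ex[OF this] show ?thesis using that(2) unfolding f_def by blast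
      qed
      have "encY ` {(a,n). a \<in> Field W \<and> f a \<le> n} \<in> BY" unfolding BY_def
        by (rule image_eqI[where x=f]) simp_all
      hence "encY ` {(a,n). a \<in> Field W \<and> f a \<le> n} \<inter> A \<noteq> {}" using mt by blast
      then obtain a n where an: "a \<in> Field W" "f a \<le> n" "encY (a,n) \<in> A" by blast
      hence "n \<in> Col a" unfolding Col_def by simp
      thus False using fp[OF an(1)] an(2) by fastforce
    qed
    then obtain a where a: "a \<in> Field W" "infinite (Col a)" by blast
    let ?Bc = "encY ` ((\<lambda>n. (a,n)) ` Col a)"
    have "?Bc \<subseteq> A" unfolding Col_def by auto
    moreover have "countable ?Bc" by simp
    moreover have "y \<in> Ys closure_of ?Bc"
    proof -
      have "\<forall>B\<in>BY. B \<inter> ?Bc \<noteq> {}"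
      proof
        fix B assume "B \<in> BY"
        then obtain f where f: "B = encY ` {(a,n). a \<in> Field W \<and> f a \<le> n}" unfolding BY_def by blast
        obtain n where n: "n \<in> Col a" "n > f a" using a(2) unfolding infinite_nat_iff_unbounded by blast
        have "encY (a,n) \<in> B" using f n a(1) by auto
        moreover have "encY (a,n) \<in> ?Bc" using n by auto
        ultimately show "B \<inter> ?Bc \<noteq> {}" by blast
      qed
      thus ?thesis using closure_fsp[OF fbY, of y ?Bc] yz by blast
    qed
    ultimately show ?thesis by blast
  qed
qed

lemma prod_not_tight: "\<not> countably_tight (prod_topology Xs Ys)"
proof
  assume ct: "countably_tight (prod_topology Xs Ys)"
  have tsX: "topspace Xs = insert {} PX" by (rule topspace_fsp[OF fbX])
  have tsY: "topspace Ys = insert {} PY" by (rule topspace_fsp[OF fbY])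
  have opX: "openin Xs U \<longleftrightarrow> U \<subseteq> insert {} PX \<and> ({} \<in> U \<longrightarrow> (\<exists>B\<in>BX. B \<subseteq> U))" for U
    by (rule openin_fsp[OF fbX])
  have opY: "openin Ys U \<longleftrightarrow> U \<subseteq> insert {} PY \<and> ({} \<in> U \<longrightarrow> (\<exists>B\<in>BY. B \<subseteq> U))" for U
    by (rule openin_fsp[OF fbY])
  define A where "A = {(encX p, encY (a,p)) | a p. a \<in> Field W \<and> p \<in> E a}"
  have Asub: "A \<subseteq> topspace (prod_topology Xs Ys)"
    unfolding topspace_prod_topology tsX tsY by (auto simp: A_def PX_def PY_def)
  have cl: "({},{}) \<in> prod_topology Xs Ys closure_of A"
    unfolding in_closure_of
  proof (intro conjI allI impI)
    show "({},{}) \<in> topspace (prod_topology Xs Ys)" by (simp add: topspace_prod_topology tsX tsY)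
    fix T assume T: "({},{}) \<in> T \<and> openin (prod_topology Xs Ys) T"
    have "\<exists>U V. openin Xs U \<and> openin Ys V \<and> {} \<in> U \<and> {} \<in> V \<and> U \<times> V \<subseteq> T"
      using T unfolding openin_prod_topology_alt by blast
    then obtain U V where UV: "openin Xs U" "openin Ys V" "{} \<in> U" "{} \<in> V" "U \<times> V \<subseteq> T" by blast
    obtain B1 where B1: "B1 \<in> BX" "B1 \<subseteq> U" using UV(1,3) opX by blast
    then obtain b k where bk: "b \<in> Field W" "B1 = encX ` (H b - {..<k})" unfolding BX_def by auto
    obtain B2 where B2: "B2 \<in> BY" "B2 \<subseteq> V" using UV(2,4) opY by blast
    then obtain f where f: "B2 = encY ` {(a,n). a \<in> Field W \<and> f a \<le> n}" unfolding BY_def by auto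
    obtain p where p: "p \<in> E b" "p > max k (f b)" using E_inf[OF bk(1)] unfolding infinite_nat_iff_unbounded by blast
    have "p \<in> H b - {..<k}" using p by (auto simp: E_def)
    hence "encX p \<in> U" using B1 bk by auto
    moreover have "encY (b,p) \<in> V" using B2 f bk(1) p(2) by auto
    moreover have "(encX p, encY (b,p)) \<in> A" unfolding A_def using bk(1) p(1) by blast
    ultimately show "\<exists>y. y \<in> A \<and> y \<in> T" using UV(5) by blast
  qed
  obtain Bc where Bc: "Bc \<subseteq> A" "countable Bc" "({},{}) \<in> prod_topology Xs Ys closure_of Bc"
    using ct Asub cl unfolding countably_tight_def by blast
  define J where "J = {a \<in> Field W. \<exists>p. (encX p, encY (a,p)) \<in> Bc}"
  have "J \<subseteq> (\<lambda>q. fst (inv encY (snd q))) ` Bc"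
  proof
    fix a assume "a \<in> J"
    then obtain p where p: "(encX p, encY (a,p)) \<in> Bc" unfolding J_def by blast
    have "inv encY (encY (a,p)) = (a,p)" by (rule inv_f_f[OF inj_encY])
    hence "a = (\<lambda>q. fst (inv encY (snd q))) (encX p, encY (a,p))" by simp
    thus "a \<in> (\<lambda>q. fst (inv encY (snd q))) ` Bc" using p by blast
  qed
  hence cJ: "countable J" by (rule countable_subset[OF _ countable_image[OF Bc(2)]])
  have JF: "J \<subseteq> Field W" unfolding J_def by auto
  have cK: "countable (sc ` J)" using cJ by simp
  have KF: "sc ` J \<subseteq> Field W" using JF sc_prop(1) by blast
  obtain g where g: "g \<in> Field W" "\<forall>b\<in>sc ` J. (b,g) \<in> W \<and> b \<noteq> g" using W_bound[OF cK KF] by blast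
  have fin: "finite (H g - H (sc a))" if "a \<in> J" for a
  proof -
    have "sc a \<in> underS W g" using g(2) that by (simp add: underS_def)
    thus ?thesis using H_good[OF g(1)] by (simp add: good_def)
  qed
  define f where "f a = (SOME m. \<forall>x\<in>H g - H (sc a). x < m)" for a
  have fp: "x < f a" if "a \<in> J" "x \<in> H g - H (sc a)" for a x
  proof -
    have "\<exists>m. \<forall>x\<in>H g - H (sc a). x < m" using fin[OF that(1)] finite_nat_set_iff_bounded by blast
    from someI_ex[OF this] show ?thesis using that(2) unfolding f_def by blast
  qed
  define U where "U = insert {} (encX ` H g)"
  define V where "V = insert {} (encY ` {(a,n). a \<in> Field W \<and> f a \<le> n})"
  have oU: "openin Xs U"
  proof -
    have "encX ` (H g - {..<0}) \<in> BX" unfolding BX_def by (rule image_eqI[where x="(g,0)"]) (simp_all add: g(1))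
    moreover have "encX ` (H g - {..<0}) \<subseteq> U" unfolding U_def by auto
    moreover have "U \<subseteq> insert {} PX" unfolding U_def PX_def by auto
    ultimately show ?thesis unfolding opX by blast
  qed
  have oV: "openin Ys V"
  proof -
    have "encY ` {(a,n). a \<in> Field W \<and> f a \<le> n} \<in> BY" unfolding BY_def by (rule image_eqI[where x=f]) simp_all
    moreover have "encY ` {(a,n). a \<in> Field W \<and> f a \<le> n} \<subseteq> V" unfolding V_def by auto
    moreover have "V \<subseteq> insert {} PY" unfolding V_def PY_def by auto
    ultimately show ?thesis unfolding opY by blast
  qed
  have oUV: "openin (prod_topology Xs Ys) (U \<times> V)" using oU oV by (simp add: openin_prod_Times_iff)
  have mem: "({},{}) \<in> U \<times> V" unfolding U_def V_def by simp
  have cl3: "\<forall>T. ({},{}) \<in> T \<and> openin (prod_topology Xs Ys) T \<longrightarrow> (\<exists>y. y \<in> Bc \<and> y \<in> T)"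
    using Bc(3) unfolding in_closure_of by (rule conjunct2)
  have "\<exists>y. y \<in> Bc \<and> y \<in> U \<times> V" using cl3[rule_format, OF conjI[OF mem oUV]] .
  then obtain q where q: "q \<in> Bc" "q \<in> U \<times> V" by blast
  have "q \<in> A" using q(1) Bc(1) by blast
  hence "\<exists>a p. q = (encX p, encY (a,p)) \<and> a \<in> Field W \<and> p \<in> E a" unfolding A_def by simp
  then obtain a p where ap: "q = (encX p, encY (a,p))" "a \<in> Field W" "p \<in> E a" by blast
  have aJ: "a \<in> J" unfolding J_def using ap q(1) by blast
  have "encX p \<in> encX ` H g" using q(2) ap(1) encX_ne unfolding U_def by auto
  hence pg: "p \<in> H g" using inj_encX by (simp add: inj_image_mem_iff)
  have "encY (a,p) \<in> encY ` {(a,n). a \<in> Field W \<and> f a \<le> n}" using q(2) ap(1) encY_ne unfolding V_def by auto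
  hence "(a,p) \<in> {(a,n). a \<in> Field W \<and> f a \<le> n}" using inj_encY by (simp only: inj_image_mem_iff)
  hence "f a \<le> p" by simp
  moreover have "p \<in> H g - H (sc a)" using pg ap(3) by (simp add: E_def)
  ultimately show False using fp[OF aJ] by fastforce
qed

lemma game_X:
  assumes cov: "covM_gt_aleph1" and x: "x \<in> topspace Xs"
  shows "\<not> playerI_wins_G1_Omega Xs x"
proof (cases "x = {}")
  case True
  have cP: "countable PX" unfolding PX_def by simp
  have "BX = (\<lambda>(a,k). encX ` (H a - {..<k})) ` (Field W \<times> UNIV)" by (simp add: BX_def)
  from game_lemma[OF cov fbX cP this card_FW] show ?thesis using True by simp
next
  case False
  have "Omega_at Xs x = {}"
  proof (rule ccontr)
    assume "Omega_at Xs x \<noteq> {}"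
    then obtain A where "x \<in> Xs closure_of A" "x \<notin> A" unfolding Omega_at_def by blast
    thus False using closure_fsp[OF fbX] False by blast
  qed
  thus ?thesis unfolding playerI_wins_G1_Omega_def by blast
qed

theorem proposition4p5:
  assumes "covM_gt_aleph1"
  shows "\<exists>X :: real set set topology.
           tychonoff_space X \<and>
           \<not> productively_countably_tight_wrt TYPE(real set set) X \<and>
           (\<forall>x\<in>topspace X. \<not> playerI_wins_G1_Omega X x)"
proof (intro exI conjI)
  show "tychonoff_space Xs" by (rule tychonoff_fsp[OF fbX])
  show "\<not> productively_countably_tight_wrt TYPE(real set set) Xs"
    unfolding productively_countably_tight_wrt_def using Y_tight prod_not_tight by blast
  show "\<forall>x\<in>topspace Xs. \<not> playerI_wins_G1_Omega Xs x" using game_X[OF assms] by blast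
qed

end
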